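(* The PAFP problem with well-parenthesized forbidden pairs can be solved in $O(n^3)$ time, where $n=|V|$. That is: given a directed acyclic graph $G=(V,E)$ with $n$ vertices, a topological ordering $\prec$ of $V$, two vertices $s,t\in V$, and a set $F$ of forbidden pairs of vertices that is well-parenthesized with respect to $\prec$, one can decide in $O(n^3)$ time whether there exists a safe $s$--$t$ path in $G$.
   Context: PAFP (Path Avoiding Forbidden Pairs) problem: given a directed acyclic graph $G=(V,E)$, vertices $s,t$, and a set $F$ of unordered pairs of vertices (forbidden pairs), determine whether there is a directed path from $s$ to $t$ that is safe, i.e. contains at most one vertex of each forbidden pair. Fix a linear (topological) ordering $\prec$ of the vertices, and write each forbidden pair as $(u,v)$ with $u\prec v$. Two forbidden pairs $(u,v)$ and $(x,y)$ halve each other if $u\prec x\prec v\prec y$. The set $F$ is well-parenthesized (with respect to $\prec$) if no two forbidden pairs halve each other, i.e. the intervals spanned by forbidden pairs are pairwise nested or disjoint. *)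

theory Defs
  imports Main
begin

text \<open>Vertices are 0..n-1, numbered along the given topological ordering,
  so the linear order of vertices is the usual order on nat.\<close>

definition is_path :: "(nat \<times> nat) set \<Rightarrow> nat list \<Rightarrow> bool" where
  "is_path E p \<longleftrightarrow> p \<noteq> [] \<and> (\<forall>i. Suc i < length p \<longrightarrow> (p ! i, p ! Suc i) \<in> E)"

definition safe :: "nat set set \<Rightarrow> nat list \<Rightarrow> bool" where
  "safe F p \<longleftrightarrow> (\<forall>P\<in>F. \<not> P \<subseteq> set p)"

definition safe_path_exists ::
  "(nat \<times> nat) set \<Rightarrow> nat set set \<Rightarrow> nat \<Rightarrow> nat \<Rightarrow> bool" where
  "safe_path_exists E F s t \<longleftrightarrow>
     (\<exists>p. is_path E p \<and> hd p = s \<and> last p = t \<and> safe F p)"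

text \<open>(u,v) and (x,y) (with u<v, x<y) halve each other if u<x<v<y.\<close>
definition well_parenthesized :: "nat set set \<Rightarrow> bool" where
  "well_parenthesized F \<longleftrightarrow>
     \<not> (\<exists>u v x y. {u, v} \<in> F \<and> {x, y} \<in> F \<and> u < x \<and> x < v \<and> v < y)"

definition valid_instance ::
  "nat \<Rightarrow> (nat \<times> nat) set \<Rightarrow> nat set set \<Rightarrow> nat \<Rightarrow> nat \<Rightarrow> bool" where
  "valid_instance n E F s t \<longleftrightarrow>
     E \<subseteq> {0..<n} \<times> {0..<n} \<and>
     (\<forall>(i,j)\<in>E. i < j) \<and>
     (\<forall>P\<in>F. \<exists>u v. P = {u, v} \<and> u < v \<and> v < n) \<and>
     s < n \<and> t < n"

datatype instr =
    LoadConst nat nat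
  | Add nat nat nat
  | Sub nat nat nat        \<comment> \<open>reg r := reg a - reg b (truncated at 0)\<close>
  | Load nat nat
  | Store nat nat
  | JmpZ nat nat
  | Halt

record config =
  pc  :: nat
  reg :: "nat \<Rightarrow> nat"
  mem :: "nat \<Rightarrow> nat"

definition halted :: "instr list \<Rightarrow> config \<Rightarrow> bool" where
  "halted prog c \<longleftrightarrow> pc c \<ge> length prog \<or> prog ! pc c = Halt"

fun exec :: "instr \<Rightarrow> config \<Rightarrow> config" where
  "exec (LoadConst r k) c = c\<lparr>pc := Suc (pc c), reg := (reg c)(r := k)\<rparr>"
| "exec (Add r a b) c = c\<lparr>pc := Suc (pc c), reg := (reg c)(r := reg c a + reg c b)\<rparr>"
| "exec (Sub r a b) c = c\<lparr>pc := Suc (pc c), reg := (reg c)(r := reg c a - reg c b)\<rparr>"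
| "exec (Load r a) c = c\<lparr>pc := Suc (pc c), reg := (reg c)(r := mem c (reg c a))\<rparr>"
| "exec (Store a b) c = c\<lparr>pc := Suc (pc c), mem := (mem c)(reg c a := reg c b)\<rparr>"
| "exec (JmpZ r l) c = c\<lparr>pc := (if reg c r = 0 then l else Suc (pc c))\<rparr>"
| "exec Halt c = c"

definition step :: "instr list \<Rightarrow> config \<Rightarrow> config" where
  "step prog c = (if halted prog c then c else exec (prog ! pc c) c)"

fun run :: "instr list \<Rightarrow> nat \<Rightarrow> config \<Rightarrow> config" where
  "run prog 0 c = c"
| "run prog (Suc k) c = run prog k (step prog c)"

text \<open>Input encoding: mem 0 = n, mem 1 = s, mem 2 = t,
  mem (3 + i*n + j) = 1 iff (i,j) is an edge (i,j < n),
  mem (3 + n*n + i*n + j) = 1 iff {i,j} is a forbidden pair (i,j < n);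
  all other cells and all registers are 0; execution starts at pc 0.\<close>

definition input_mem ::
  "nat \<Rightarrow> (nat \<times> nat) set \<Rightarrow> nat set set \<Rightarrow> nat \<Rightarrow> nat \<Rightarrow> nat \<Rightarrow> nat" where
  "input_mem n E F s t a =
     (if a = 0 then n else if a = 1 then s else if a = 2 then t
      else if a < 3 + n * n then
        (let i = (a - 3) div n; j = (a - 3) mod n in if (i, j) \<in> E then 1 else 0)
      else if a < 3 + 2 * (n * n) then
        (let i = (a - 3 - n * n) div n; j = (a - 3 - n * n) mod n in
           if {i, j} \<in> F then 1 else 0)
      else 0)"

definition init_config ::
  "nat \<Rightarrow> (nat \<times> nat) set \<Rightarrow> nat set set \<Rightarrow> nat \<Rightarrow> nat \<Rightarrow> config" where
  "init_config n E F s t = \<lparr>pc = 0, reg = (\<lambda>_. 0), mem = input_mem n E F s t\<rparr>"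

end

theory Submission
  imports Defs
begin


type_synonym st = "(nat \<Rightarrow> nat) \<times> (nat \<Rightarrow> nat)"

fun sexec :: "instr \<Rightarrow> st \<Rightarrow> st" where
  "sexec (LoadConst r k) (R,M) = (R(r := k), M)"
| "sexec (Add r a b) (R,M) = (R(r := R a + R b), M)"
| "sexec (Sub r a b) (R,M) = (R(r := R a - R b), M)"
| "sexec (Load r a) (R,M) = (R(r := M (R a)), M)"
| "sexec (Store a b) (R,M) = (R, M(R a := R b))"
| "sexec _ s = s"

fun execl :: "instr list \<Rightarrow> st \<Rightarrow> st" where
  "execl [] s = s"
| "execl (i # xs) s = execl xs (sexec i s)"

datatype com = Block "instr list" | Seq com com | IfC nat com com | While nat com

fun clen :: "com \<Rightarrow> nat" where
  "clen (Block xs) = length xs"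
| "clen (Seq c1 c2) = clen c1 + clen c2"
| "clen (IfC r c1 c2) = clen c1 + clen c2 + 2"
| "clen (While r c) = clen c + 2"

definition ZR :: nat where "ZR = 50"

fun comp :: "nat \<Rightarrow> com \<Rightarrow> instr list" where
  "comp p (Block xs) = xs"
| "comp p (Seq c1 c2) = comp p c1 @ comp (p + clen c1) c2"
| "comp p (IfC r c1 c2) = [JmpZ r (p + 2 + clen c1)] @ comp (p+1) c1 @
      [JmpZ ZR (p + 2 + clen c1 + clen c2)] @ comp (p + 2 + clen c1) c2"
| "comp p (While r c) = [JmpZ r (p + 2 + clen c)] @ comp (p+1) c @ [JmpZ ZR p]"

lemma length_comp[simp]: "length (comp p c) = clen c"
  by (induction c arbitrary: p) auto

fun bok :: "instr \<Rightarrow> bool" where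
  "bok (LoadConst r _) = (r \<noteq> ZR)"
| "bok (Add r _ _) = (r \<noteq> ZR)"
| "bok (Sub r _ _) = (r \<noteq> ZR)"
| "bok (Load r _) = (r \<noteq> ZR)"
| "bok (Store _ _) = True"
| "bok _ = False"

fun wfc :: "com \<Rightarrow> bool" where
  "wfc (Block xs) = (\<forall>i\<in>set xs. bok i)"
| "wfc (Seq c1 c2) = (wfc c1 \<and> wfc c2)"
| "wfc (IfC r c1 c2) = (wfc c1 \<and> wfc c2)"
| "wfc (While r c) = wfc c"

inductive big :: "com \<Rightarrow> st \<Rightarrow> nat \<Rightarrow> st \<Rightarrow> bool" where
  Blk: "big (Block xs) s (length xs) (execl xs s)"
| Sq: "big c1 s t1 s1 \<Longrightarrow> big c2 s1 t2 s2 \<Longrightarrow> big (Seq c1 c2) s (t1+t2) s2"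
| IfT: "fst s r \<noteq> 0 \<Longrightarrow> big c1 s t s' \<Longrightarrow> big (IfC r c1 c2) s (t+2) s'"
| IfF: "fst s r = 0 \<Longrightarrow> big c2 s t s' \<Longrightarrow> big (IfC r c1 c2) s (t+1) s'"
| WhF: "fst s r = 0 \<Longrightarrow> big (While r c) s 1 s"
| WhT: "fst s r \<noteq> 0 \<Longrightarrow> big c s t1 s1 \<Longrightarrow> big (While r c) s1 t2 s2 \<Longrightarrow>
         big (While r c) s (t1+2+t2) s2"

lemma sexec_Z: "bok i \<Longrightarrow> fst (sexec i s) ZR = fst s ZR"
  by (cases s; cases i) auto

lemma execl_Z: "\<forall>i\<in>set xs. bok i \<Longrightarrow> fst (execl xs s) ZR = fst s ZR"
  by (induction xs arbitrary: s) (auto simp: sexec_Z)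

lemma big_Z: "big c s t s' \<Longrightarrow> wfc c \<Longrightarrow> fst s' ZR = fst s ZR"
  by (induction rule: big.induct) (auto simp: execl_Z)

lemma run_add: "run prog (a + b) c = run prog b (run prog a c)"
  by (induction a arbitrary: c) auto

definition code_at :: "instr list \<Rightarrow> nat \<Rightarrow> instr list \<Rightarrow> bool" where
  "code_at prog p xs \<longleftrightarrow> p + length xs \<le> length prog \<and> (\<forall>i<length xs. prog ! (p+i) = xs ! i)"

lemma code_at_append[simp]:
  "code_at prog p (xs @ ys) \<longleftrightarrow> code_at prog p xs \<and> code_at prog (p + length xs) ys"
proof
  assume A: "code_at prog p (xs @ ys)"
  have 1: "code_at prog p xs" unfolding code_at_def
  proof (intro conjI allI impI)
    show "p + length xs \<le> length prog" using A unfolding code_at_def by auto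
    fix i assume "i < length xs"
    then show "prog ! (p + i) = xs ! i" using A unfolding code_at_def
      by (metis length_append nth_append trans_less_add1)
  qed
  have 2: "code_at prog (p + length xs) ys" unfolding code_at_def
  proof (intro conjI allI impI)
    show "p + length xs + length ys \<le> length prog" using A unfolding code_at_def by auto
    fix i assume "i < length ys"
    then have "prog ! (p + (length xs + i)) = (xs @ ys) ! (length xs + i)" using A unfolding code_at_def
      by auto
    then show "prog ! (p + length xs + i) = ys ! i" by (simp add: add.assoc)
  qed
  show "code_at prog p xs \<and> code_at prog (p + length xs) ys" using 1 2 by blast
next
  assume A: "code_at prog p xs \<and> code_at prog (p + length xs) ys"
  show "code_at prog p (xs @ ys)" unfolding code_at_def
  proof (intro conjI allI impI)
    show "p + length (xs @ ys) \<le> length prog" using A unfolding code_at_def by auto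
    fix i assume i: "i < length (xs @ ys)"
    show "prog ! (p + i) = (xs @ ys) ! i"
    proof (cases "i < length xs")
      case True then show ?thesis using A unfolding code_at_def by (simp add: nth_append)
    next
      case False
      then obtain j where j: "i = length xs + j" by (metis le_add_diff_inverse not_less)
      then have "j < length ys" using i by auto
      then show ?thesis using A j unfolding code_at_def by (simp add: nth_append add.assoc)
    qed
  qed
qed

lemma code_at_Cons[simp]:
  "code_at prog p (x # ys) \<longleftrightarrow> p < length prog \<and> prog ! p = x \<and> code_at prog (Suc p) ys"
  using code_at_append[of prog p "[x]" ys] unfolding code_at_def by auto

definition cfg :: "nat \<Rightarrow> st \<Rightarrow> config" where
  "cfg p s = \<lparr>pc = p, reg = fst s, mem = snd s\<rparr>"

lemma step_basic:
  assumes "p < length prog" "prog ! p = i" "bok i"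
  shows "step prog (cfg p s) = cfg (Suc p) (sexec i s)"
proof -
  have "\<not> halted prog (cfg p s)" using assms by (cases i) (auto simp: halted_def cfg_def)
  then show ?thesis using assms by (cases s; cases i) (auto simp: step_def cfg_def)
qed

lemma step_jmp:
  assumes "p < length prog" "prog ! p = JmpZ r l"
  shows "step prog (cfg p s) = cfg (if fst s r = 0 then l else Suc p) s"
proof -
  have "\<not> halted prog (cfg p s)" using assms by (auto simp: halted_def cfg_def)
  then show ?thesis using assms by (cases s) (auto simp: step_def cfg_def)
qed

lemma run_block: "code_at prog p xs \<Longrightarrow> \<forall>i\<in>set xs. bok i \<Longrightarrow>
   run prog (length xs) (cfg p s) = cfg (p + length xs) (execl xs s)"
  by (induction xs arbitrary: p s) (auto simp: step_basic)

lemma sim: "big c s t s' \<Longrightarrow> wfc c \<Longrightarrow> fst s ZR = 0 \<Longrightarrow> code_at prog p (comp p c) \<Longrightarrow>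
  run prog t (cfg p s) = cfg (p + clen c) s'"
proof (induction arbitrary: p rule: big.induct)
  case (Blk "xs" s)
  then show ?case using run_block by auto
next
  case (Sq c1 s t1 s1 c2 t2 s2)
  have "fst s1 ZR = 0" using big_Z Sq by auto
  then show ?case using Sq by (auto simp: run_add add.assoc)
next
  case (IfT s r c1 t s' c2)
  have "fst s' ZR = 0" using big_Z IfT by auto
  have 1: "run prog 1 (cfg p s) = cfg (Suc p) s" using IfT by (auto simp: step_jmp)
  have 2: "run prog t (cfg (Suc p) s) = cfg (Suc p + clen c1) s'" using IfT by auto
  have 3: "run prog 1 (cfg (Suc p + clen c1) s') = cfg (p + clen (IfC r c1 c2)) s'"
    using IfT \<open>fst s' ZR = 0\<close> by (auto simp: step_jmp add.assoc)
  have e: "t + 2 = (1 + t) + 1" by simp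
  have "run prog (t + 2) (cfg p s) = run prog 1 (run prog t (run prog 1 (cfg p s)))"
    by (simp only: e run_add)
  then show ?case using 1 2 3 by simp
next
  case (IfF s r c2 t s' c1)
  have 1: "run prog 1 (cfg p s) = cfg (p + 2 + clen c1) s" using IfF by (auto simp: step_jmp)
  have 2: "run prog t (cfg (p + 2 + clen c1) s) = cfg (p + 2 + clen c1 + clen c2) s'" using IfF by auto
  show ?case using 1 2 by (metis run_add add.commute clen.simps(3) add.assoc add.left_commute)
next
  case (WhF s r c)
  then show ?case by (auto simp: step_jmp)
next
  case (WhT s r c t1 s1 t2 s2)
  have "fst s1 ZR = 0" using big_Z WhT by auto
  have 1: "run prog 1 (cfg p s) = cfg (Suc p) s" using WhT by (auto simp: step_jmp)
  have 2: "run prog t1 (cfg (Suc p) s) = cfg (Suc p + clen c) s1" using WhT by auto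
  have 3: "run prog 1 (cfg (Suc p + clen c) s1) = cfg p s1"
    using WhT \<open>fst s1 ZR = 0\<close> by (auto simp: step_jmp)
  have 4: "run prog t2 (cfg p s1) = cfg (p + clen (While r c)) s2" using WhT \<open>fst s1 ZR = 0\<close> by auto
  have e: "t1 + 2 + t2 = ((1 + t1) + 1) + t2" by simp
  have "run prog (t1 + 2 + t2) (cfg p s) = run prog t2 (run prog 1 (run prog t1 (run prog 1 (cfg p s))))"
    by (simp only: e run_add)
  then show ?case using 1 2 3 4 by simp
qed

definition HT :: "(st \<Rightarrow> bool) \<Rightarrow> com \<Rightarrow> (st \<Rightarrow> bool) \<Rightarrow> nat \<Rightarrow> bool" where
  "HT P c Q T \<longleftrightarrow> (\<forall>s. P s \<longrightarrow> (\<exists>t s'. big c s t s' \<and> Q s' \<and> t \<le> T))"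

lemma HT_block: "(\<And>s. P s \<Longrightarrow> Q (execl xs s)) \<Longrightarrow> length xs \<le> T \<Longrightarrow> HT P (Block xs) Q T"
  unfolding HT_def using Blk by blast

lemma HT_seq: "HT P c1 Q T1 \<Longrightarrow> HT Q c2 R T2 \<Longrightarrow> HT P (Seq c1 c2) R (T1 + T2)"
  unfolding HT_def by (meson Sq add_mono)

lemma HT_if: "HT (\<lambda>s. P s \<and> fst s r \<noteq> 0) c1 Q T \<Longrightarrow> HT (\<lambda>s. P s \<and> fst s r = 0) c2 Q T \<Longrightarrow>
  HT P (IfC r c1 c2) Q (T + 2)"
  unfolding HT_def
proof (intro allI impI)
  fix s assume A: "\<forall>s. P s \<and> fst s r \<noteq> 0 \<longrightarrow> (\<exists>t s'. big c1 s t s' \<and> Q s' \<and> t \<le> T)"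
    "\<forall>s. P s \<and> fst s r = 0 \<longrightarrow> (\<exists>t s'. big c2 s t s' \<and> Q s' \<and> t \<le> T)" "P s"
  show "\<exists>t s'. big (IfC r c1 c2) s t s' \<and> Q s' \<and> t \<le> T + 2"
  proof (cases "fst s r = 0")
    case True
    then obtain t s' where "big c2 s t s'" "Q s'" "t \<le> T" using A by blast
    then show ?thesis using IfF[OF True] by (intro exI[of _ "t+1"] exI[of _ s']) auto
  next
    case False
    then obtain t s' where "big c1 s t s'" "Q s'" "t \<le> T" using A by blast
    then show ?thesis using IfT[OF False] by (intro exI[of _ "t+2"] exI[of _ s']) auto
  qed
qed

lemma HT_conseq: "HT P c Q T \<Longrightarrow> (\<And>s. P' s \<Longrightarrow> P s) \<Longrightarrow> (\<And>s. Q s \<Longrightarrow> Q' s) \<Longrightarrow> T \<le> T' \<Longrightarrow> HT P' c Q' T'"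
  unfolding HT_def by (meson order_trans)

lemma while_aux:
  fixes I :: "nat \<Rightarrow> st \<Rightarrow> bool"
  assumes step: "\<And>k s. I k s \<Longrightarrow> k < N \<Longrightarrow> fst s r \<noteq> 0 \<and> (\<exists>t s'. big c s t s' \<and> I (Suc k) s' \<and> t \<le> T)"
  and fin: "\<And>s. I N s \<Longrightarrow> fst s r = 0"
  shows "I k s \<Longrightarrow> k \<le> N \<Longrightarrow> \<exists>t s'. big (While r c) s t s' \<and> I N s' \<and> t \<le> (N - k) * (T + 2) + 1"
proof (induction "N - k" arbitrary: k s)
  case 0
  then have "k = N" by auto
  then have "I N s" "fst s r = 0" using 0 fin by auto
  then show ?case using WhF[of s r c] \<open>k = N\<close> by (intro exI[of _ 1] exI[of _ s]) auto
next
  case (Suc x)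
  then have "k < N" by auto
  from step[OF Suc(3) this] obtain t s' where A: "fst s r \<noteq> 0" "big c s t s'" "I (Suc k) s'" "t \<le> T" by blast
  have xe: "x = N - Suc k" using Suc(2) by arith
  have sk: "Suc k \<le> N" using \<open>k < N\<close> by simp
  from Suc(1)[OF xe A(3) sk] obtain t2 s2 where
    B: "big (While r c) s' t2 s2" "I N s2" "t2 \<le> (N - Suc k) * (T + 2) + 1" by blast
  have "big (While r c) s (t + 2 + t2) s2" using WhT A B by blast
  moreover have "t + 2 + t2 \<le> (N - k) * (T + 2) + 1"
  proof -
    have "N - k = Suc (N - Suc k)" using \<open>k<N\<close> by auto
    then show ?thesis using A(4) B(3) by simp
  qed
  ultimately show ?case using B by blast
qed

lemma HT_while:
  fixes I :: "nat \<Rightarrow> nat \<Rightarrow> st \<Rightarrow> bool"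
  assumes step: "\<And>N k s. I N k s \<Longrightarrow> k < N \<Longrightarrow> fst s r \<noteq> 0 \<and> (\<exists>t s'. big c s t s' \<and> I N (Suc k) s' \<and> t \<le> T)"
  and fin: "\<And>N s. I N N s \<Longrightarrow> fst s r = 0 \<and> Q s"
  and init: "\<And>s. P s \<Longrightarrow> \<exists>N\<le>M. I N 0 s"
  shows "HT P (While r c) Q (M * (T + 2) + 1)"
  unfolding HT_def
proof clarify
  fix s assume "P s"
  then obtain N where N: "N \<le> M" "I N 0 s" using init by blast
  from while_aux[of "I N" N r c T 0 s] step fin N obtain t s' where
    "big (While r c) s t s'" "I N N s'" "t \<le> N * (T + 2) + 1" by auto
  moreover have "N * (T + 2) + 1 \<le> M * (T + 2) + 1" by (metis N(1) add_le_mono1 mult_le_mono1)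
  ultimately show "\<exists>t s'. big (While r c) s t s' \<and> Q s' \<and> t \<le> M * (T + 2) + 1"
    using fin by (meson order_trans)
qed



fun curf :: "nat set set \<Rightarrow> nat \<Rightarrow> nat \<Rightarrow> nat" where
  "curf F a 0 = 0"
| "curf F a (Suc b) = (if a < Suc b \<and> {a, Suc b} \<in> F then Suc (Suc b) else curf F a b)"

lemma curf_0: "curf F a b = 0 \<Longrightarrow> a < u \<Longrightarrow> u \<le> b \<Longrightarrow> {a,u} \<notin> F"
  by (induction b) (auto simp: le_Suc_eq split: if_splits)

lemma curf_Suc: "curf F a b = Suc v \<Longrightarrow> a < v \<and> v \<le> b \<and> {a,v} \<in> F \<and> (\<forall>u. v < u \<and> u \<le> b \<longrightarrow> {a,u} \<notin> F)"
  by (induction b) (auto simp: le_Suc_eq split: if_splits)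

lemma curf_mono0: "curf F a b = 0 \<Longrightarrow> b' \<le> b \<Longrightarrow> curf F a b' = 0"
  by (induction b) (auto simp: le_Suc_eq split: if_splits)

lemma curf_monoS: "curf F a b = Suc v \<Longrightarrow> v \<le> b' \<Longrightarrow> b' \<le> b \<Longrightarrow> curf F a b' = Suc v"
  by (induction b) (auto simp: le_Suc_eq split: if_splits)

lemma curf_le: "b \<le> a \<Longrightarrow> curf F a b = 0"
  by (induction b) auto

definition sp where "sp E F a b = safe_path_exists E F a b"

definition xhi :: "nat set set \<Rightarrow> nat \<Rightarrow> nat \<Rightarrow> nat" where
  "xhi F a b = (if curf F a b = 0 then a + 1 else curf F a b - 1)"

definition lo :: "nat set set \<Rightarrow> nat \<Rightarrow> nat \<Rightarrow> nat" where
  "lo F a b = (if curf F a b = 0 then a + 1 else curf F a b)"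

definition jspec where
  "jspec E F a y = (\<exists>x. a \<le> x \<and> x < xhi F a (y - 1) \<and> sp E F a x \<and> (x, y) \<in> E)"

lemma is_path_single[simp]: "is_path E [x]"
  by (auto simp: is_path_def)

lemma is_path_Cons2[simp]: "is_path E (x # y # ys) \<longleftrightarrow> (x,y) \<in> E \<and> is_path E (y # ys)"
  unfolding is_path_def
  apply auto
  using less_Suc_eq_0_disj by fastforce

lemma is_path_append: "p1 \<noteq> [] \<Longrightarrow> p2 \<noteq> [] \<Longrightarrow>
   is_path E (p1 @ p2) \<longleftrightarrow> is_path E p1 \<and> is_path E p2 \<and> (last p1, hd p2) \<in> E"
proof (induction p1 rule: induct_list012)
  case 1 then show ?case by simp
next
  case (2 x) then show ?case by (cases p2) auto
next
  case (3 x y zs) then show ?case by simp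
qed

locale inst =
  fixes n E F s t
  assumes vi: "valid_instance n E F s t" and wp: "well_parenthesized F"
begin

lemma edge: "(i,j) \<in> E \<Longrightarrow> i < j \<and> j < n"
  using vi unfolding valid_instance_def by auto

lemma pair: "P \<in> F \<Longrightarrow> \<exists>u v. P = {u,v} \<and> u < v \<and> v < n"
  using vi unfolding valid_instance_def by auto

lemma path_range: "is_path E p \<Longrightarrow> w \<in> set p \<Longrightarrow> hd p \<le> w \<and> w \<le> last p"
proof (induction p arbitrary: w rule: induct_list012)
  case (3 x y zs)
  have "(x,y) \<in> E" "is_path E (y # zs)" using 3 by auto
  then have xy: "x < y" using edge by auto
  have IH: "\<And>w. w \<in> set (y # zs) \<Longrightarrow> y \<le> w \<and> w \<le> last (y # zs)"
    using 3(2) \<open>is_path E (y # zs)\<close> by auto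
  show ?case
  proof (cases "w = x")
    case True
    then show ?thesis using IH[of y] xy by simp
  next
    case False
    then have "w \<in> set (y # zs)" using 3 by auto
    then show ?thesis using IH[of w] xy by simp
  qed
qed auto

lemma path_lt: "is_path E p \<Longrightarrow> p = x # q \<Longrightarrow> q \<noteq> [] \<Longrightarrow> x < hd q"
  by (cases q) (auto dest: edge)

lemma sp_refl: "sp E F a a"
  unfolding sp_def safe_path_exists_def safe_def
  apply (rule exI[of _ "[a]"])
  using pair by fastforce

lemma sp_range: "sp E F a b \<Longrightarrow> a \<le> b"
  unfolding sp_def safe_path_exists_def
  using path_range by (metis hd_in_set is_path_def)

lemma safe_sub: "safe F p \<Longrightarrow> set q \<subseteq> set p \<Longrightarrow> safe F q"
  unfolding safe_def by blast

lemma split_list_v: "hd p < (v::nat) \<Longrightarrow> v < last p \<Longrightarrow> v \<notin> set p \<Longrightarrow> p \<noteq> [] \<Longrightarrow>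
  \<exists>p1 p2. p = p1 @ p2 \<and> p1 \<noteq> [] \<and> p2 \<noteq> [] \<and> last p1 < v \<and> v < hd p2"
proof (induction p)
  case Nil then show ?case by simp
next
  case (Cons x q)
  then have "q \<noteq> []" by auto
  show ?case
  proof (cases "v < hd q")
    case True
    then show ?thesis using Cons \<open>q \<noteq> []\<close> by (intro exI[of _ "[x]"] exI[of _ q]) auto
  next
    case False
    then have "hd q < v" using Cons \<open>q \<noteq> []\<close> by (metis hd_in_set linorder_neqE_nat list.set_intros(2))
    with Cons.IH obtain p1 p2 where "q = p1 @ p2 \<and> p1 \<noteq> [] \<and> p2 \<noteq> [] \<and> last p1 < v \<and> v < hd p2"
      using Cons \<open>q \<noteq> []\<close> by auto
    then show ?thesis by (intro exI[of _ "x # p1"] exI[of _ p2]) auto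
  qed
qed

lemma main_eq:
  assumes "a < b"
  shows "sp E F a b \<longleftrightarrow> (\<exists>y. lo F a b \<le> y \<and> y \<le> b \<and> jspec E F a y \<and> sp E F y b)"
proof
  assume "sp E F a b"
  then obtain p where p: "is_path E p" "hd p = a" "last p = b" "safe F p"
    unfolding sp_def safe_path_exists_def by auto
  have pne: "p \<noteq> []" using p is_path_def by auto
  have rng: "\<And>x. x \<in> set p \<Longrightarrow> a \<le> x \<and> x \<le> b" using path_range p by auto
  have ain: "a \<in> set p" "b \<in> set p" using p pne by auto
  show "\<exists>y. lo F a b \<le> y \<and> y \<le> b \<and> jspec E F a y \<and> sp E F y b"
  proof (cases "curf F a b")
    case 0
    obtain q where q: "p = a # q" using p pne by (cases p) auto
    have qne: "q \<noteq> []" using q p assms by auto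
    let ?c = "hd q"
    have E1: "(a, ?c) \<in> E" using p q qne by (cases q) auto
    have qp: "is_path E q" using p q qne by (cases q) auto
    have cb: "?c \<le> b" using rng q qne by auto
    have "curf F a (?c - 1) = 0" using curf_mono0[OF 0] cb by auto
    then have "xhi F a (?c - 1) = a + 1" unfolding xhi_def by auto
    then have "jspec E F a ?c" unfolding jspec_def using E1 sp_refl by auto
    moreover have "sp E F ?c b" unfolding sp_def safe_path_exists_def
      using qp q p qne safe_sub[OF p(4), of q] by (intro exI[of _ q]) auto
    moreover have "lo F a b \<le> ?c" unfolding lo_def using 0 edge[OF E1] by auto
    ultimately show ?thesis using cb by blast
  next
    case (Suc v)
    note cv = curf_Suc[OF Suc]
    have "v \<notin> set p"
    proof
      assume "v \<in> set p"
      then have "{a,v} \<subseteq> set p" using ain by auto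
      then show False using p(4) cv unfolding safe_def by auto
    qed
    then have "v < b" using cv ain by (metis le_neq_implies_less)
    from split_list_v[of p v] p pne cv \<open>v < b\<close> \<open>v \<notin> set p\<close>
    obtain p1 p2 where sp12: "p = p1 @ p2" "p1 \<noteq> []" "p2 \<noteq> []" "last p1 < v" "v < hd p2" by auto
    have pp: "is_path E p1" "is_path E p2" "(last p1, hd p2) \<in> E"
      using is_path_append[of p1 p2 E] sp12 p by auto
    let ?x = "last p1" and ?y = "hd p2"
    have yb: "?y \<le> b" using rng sp12 by auto
    have ax: "a \<le> ?x" using rng sp12 by auto
    have "curf F a (?y - 1) = Suc v" using curf_monoS[OF Suc, of "?y - 1"] sp12 yb by auto
    then have "xhi F a (?y - 1) = v" unfolding xhi_def by auto
    moreover have "sp E F a ?x" unfolding sp_def safe_path_exists_def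
      using pp sp12 p safe_sub[OF p(4), of p1] by (intro exI[of _ p1]) auto
    ultimately have "jspec E F a ?y" unfolding jspec_def using sp12 pp ax by blast
    moreover have "sp E F ?y b" unfolding sp_def safe_path_exists_def
      using pp sp12 p safe_sub[OF p(4), of p2] by (intro exI[of _ p2]) auto
    moreover have "lo F a b \<le> ?y" unfolding lo_def using Suc sp12 by auto
    ultimately show ?thesis using yb by blast
  qed
next
  assume "\<exists>y. lo F a b \<le> y \<and> y \<le> b \<and> jspec E F a y \<and> sp E F y b"
  then obtain y x where y: "lo F a b \<le> y" "y \<le> b" "sp E F y b" "a \<le> x" "x < xhi F a (y - 1)"
    "sp E F a x" "(x,y) \<in> E" unfolding jspec_def by auto
  obtain p1 where p1: "is_path E p1" "hd p1 = a" "last p1 = x" "safe F p1"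
    using y unfolding sp_def safe_path_exists_def by auto
  obtain p2 where p2: "is_path E p2" "hd p2 = y" "last p2 = b" "safe F p2"
    using y unfolding sp_def safe_path_exists_def by auto
  have ne: "p1 \<noteq> []" "p2 \<noteq> []" using p1 p2 is_path_def by auto
  have r1: "\<And>u. u \<in> set p1 \<Longrightarrow> a \<le> u \<and> u \<le> x" using path_range p1 by auto
  have r2: "\<And>u. u \<in> set p2 \<Longrightarrow> y \<le> u \<and> u \<le> b" using path_range p2 by auto
  have cross: "\<And>u w. u \<in> set p1 \<Longrightarrow> w \<in> set p2 \<Longrightarrow> {u,w} \<notin> F"
  proof
    fix u w assume uw: "u \<in> set p1" "w \<in> set p2" "{u,w} \<in> F"
    show False
    proof (cases "curf F a b")
      case 0
      then have "curf F a (y - 1) = 0" using curf_mono0 y by auto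
      then have "x = a" using y by (auto simp: xhi_def)
      then have "u = a" using r1 uw by force
      moreover have "y \<le> w" "w \<le> b" using r2 uw by auto
      moreover have "a < y" using y 0 by (auto simp: lo_def)
      ultimately show False using curf_0[OF 0] uw by auto
    next
      case (Suc v)
      note cv = curf_Suc[OF Suc]
      have "curf F a (y - 1) = Suc v" using curf_monoS[OF Suc, of "y - 1"] y Suc by (auto simp: lo_def)
      then have xv: "x < v" using y by (auto simp: xhi_def)
      have "y \<le> w" "w \<le> b" using r2 uw by auto
      moreover have "v < y" using y Suc by (auto simp: lo_def)
      ultimately have vw: "v < w" "w \<le> b" by auto
      have uv: "a \<le> u" "u < v" using r1 uw xv by force+
      show False
      proof (cases "u = a")
        case True then show False using cv uw vw by auto
      next
        case False
        then have "a < u" using uv by auto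
        then show False using wp unfolding well_parenthesized_def using cv uw uv vw by blast
      qed
    qed
  qed
  have "is_path E (p1 @ p2)" using is_path_append[of p1 p2 E] ne p1 p2 y by auto
  moreover have "safe F (p1 @ p2)"
    unfolding safe_def
  proof
    fix P assume "P \<in> F"
    then obtain u w where uw: "P = {u,w}" "u < w" using pair by blast
    show "\<not> P \<subseteq> set (p1 @ p2)"
    proof
      assume sub: "P \<subseteq> set (p1 @ p2)"
      have "\<not> P \<subseteq> set p1" "\<not> P \<subseteq> set p2" using p1 p2 \<open>P \<in> F\<close> unfolding safe_def by auto
      then have "(u \<in> set p1 \<and> w \<in> set p2) \<or> (w \<in> set p1 \<and> u \<in> set p2)" using sub uw by auto
      then show False using cross \<open>P \<in> F\<close> uw by (metis insert_commute)
    qed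
  qed
  ultimately show "sp E F a b" unfolding sp_def safe_path_exists_def
    using ne p1 p2 by (intro exI[of _ "p1 @ p2"]) auto
qed

end


definition JBody :: com where
  "JBody = Block [Load 17 15, Load 18 16, Add 17 17 18, Sub 17 17 2, Add 14 14 17,
                  Add 13 13 2, Add 15 15 2, Add 16 16 1, Sub 21 19 13]"

definition SBody :: com where
  "SBody = Block [Load 17 15, Load 18 16, Add 17 17 18, Sub 17 17 2, Add 14 14 17,
                  Sub 13 13 2, Sub 15 15 2, Sub 16 16 1, Add 17 13 2, Sub 21 17 19]"

definition BBody :: com where
  "BBody =
    Seq (IfC 11 (Block [Sub 19 11 2]) (Block [Add 19 6 2]))
   (Seq (Block [LoadConst 14 0, Add 13 6 ZR, Add 15 8 6, Add 16 7 10, Sub 21 19 13])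
   (Seq (While 21 JBody)
   (Seq (Block [Sub 17 2 14, Sub 17 2 17, Add 15 9 10, Store 15 17, Add 15 7 3, Add 15 15 10, Load 17 15])
   (Seq (IfC 17 (Block [Add 11 10 2]) (Block []))
   (Seq (IfC 11 (Block [Add 19 11 ZR]) (Block [Add 19 6 2]))
   (Seq (Block [LoadConst 14 0, Add 13 10 ZR, Add 15 9 10, Add 16 22 10, Add 17 13 2, Sub 21 17 19])
   (Seq (While 21 SBody)
        (Block [Sub 17 2 14, Sub 17 2 17, Add 15 8 10, Store 15 17, Add 10 10 2, Add 22 22 1, Sub 12 1 10]))))))))"

definition ABody :: com where
  "ABody =
    Seq (Block [Sub 6 20 2, Sub 7 7 1, Sub 8 8 1, Sub 9 9 1, Add 15 8 6, Store 15 2,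
                LoadConst 11 0, Add 10 6 2, Add 22 8 1, Sub 12 1 10])
   (Seq (While 12 BBody) (Block [Sub 20 20 2]))"

definition Main :: com where
  "Main =
    Seq (Block [Load 1 ZR, LoadConst 2 1, LoadConst 3 0, Add 23 1 ZR])
   (Seq (While 23 (Block [Add 3 3 1, Sub 23 23 2]))
   (Seq (Block [LoadConst 17 3, Add 4 17 3, Add 4 4 3, Add 5 4 3, Add 20 1 ZR,
                Add 7 17 3, Add 8 5 3, Add 9 4 3])
   (Seq (While 20 ABody)
   (Seq (Block [LoadConst 17 1, Load 24 17, LoadConst 17 2, Load 25 17, Add 15 5 ZR, Add 23 24 ZR])
   (Seq (While 23 (Block [Add 15 15 1, Sub 23 23 2]))
        (Block [Add 15 15 25, Load 0 15]))))))"

lemma wfc_Main: "wfc Main"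
  by (simp add: Main_def ABody_def BBody_def JBody_def SBody_def ZR_def)

context inst begin

lemma mul_lt: "i < n \<Longrightarrow> j < n \<Longrightarrow> i * n + j < n * n"
proof -
  assume a: "i < n" "j < n"
  have "i * n + j < i * n + n" using a by simp
  also have "\<dots> = (i + 1) * n" by simp
  also have "\<dots> \<le> n * n" using a by (intro mult_le_mono1) simp
  finally show ?thesis .
qed

lemma mul_div: "j < n \<Longrightarrow> (i * n + j) div n = i" "j < n \<Longrightarrow> (i * n + j) mod n = j"
  by auto

lemma mul_inj: "j < n \<Longrightarrow> j' < n \<Longrightarrow> i * n + j = i' * n + j' \<longleftrightarrow> i = i' \<and> j = j'"
  by (metis mul_div)

lemma in_E: "i < n \<Longrightarrow> j < n \<Longrightarrow> input_mem n E F s t (3 + i * n + j) = (if (i,j) \<in> E then 1 else 0)"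
proof -
  assume ij: "i < n" "j < n"
  have lt: "i * n + j < n * n" using mul_lt ij by auto
  have d: "(3 + i * n + j - 3) div n = i" "(3 + i * n + j - 3) mod n = j" using ij by auto
  show ?thesis unfolding input_mem_def Let_def using lt d by simp
qed

lemma in_F: "i < n \<Longrightarrow> j < n \<Longrightarrow> input_mem n E F s t (3 + n * n + i * n + j) = (if {i,j} \<in> F then 1 else 0)"
proof -
  assume ij: "i < n" "j < n"
  have lt: "i * n + j < n * n" using mul_lt ij by auto
  have d: "(3 + n * n + i * n + j - 3 - n * n) div n = i" "(3 + n * n + i * n + j - 3 - n * n) mod n = j" using ij by auto
  show ?thesis unfolding input_mem_def Let_def using lt d by simp
qed

lemma in_high: "3 + 2 * (n * n) \<le> x \<Longrightarrow> input_mem n E F s t x = 0"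
  unfolding input_mem_def by simp

definition expS :: "nat \<Rightarrow> nat \<Rightarrow> nat \<Rightarrow> nat \<Rightarrow> nat" where
  "expS a0 b0 i j = (if (a0 < i \<or> (i = a0 \<and> j < b0)) \<and> sp E F i j then 1 else 0)"

definition expJ :: "nat \<Rightarrow> nat \<Rightarrow> nat \<Rightarrow> nat \<Rightarrow> nat" where
  "expJ a0 b0 i y = (if (a0 < i \<or> (i = a0 \<and> y < b0)) \<and> i < y \<and> jspec E F i y then 1 else 0)"

definition MI :: "nat \<Rightarrow> nat \<Rightarrow> nat \<Rightarrow> (nat \<Rightarrow> nat) \<Rightarrow> bool" where
  "MI a0 bs bj M \<longleftrightarrow> (\<forall>x < 3 + 2 * (n * n). M x = input_mem n E F s t x) \<and>
     (\<forall>i<n. \<forall>j<n. M (3 + 3 * (n * n) + i * n + j) = expS a0 bs i j) \<and>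
     (\<forall>i<n. \<forall>j<n. M (3 + 2 * (n * n) + i * n + j) = expJ a0 bj i j)"

lemma MI_E: "MI a0 bs bj M \<Longrightarrow> i < n \<Longrightarrow> j < n \<Longrightarrow> A = 3 + i * n + j \<Longrightarrow>
   M A = (if (i,j) \<in> E then 1 else 0)"
  unfolding MI_def using mul_lt[of i j] in_E[of i j] by auto

lemma MI_F: "MI a0 bs bj M \<Longrightarrow> i < n \<Longrightarrow> j < n \<Longrightarrow> A = 3 + n * n + i * n + j \<Longrightarrow>
   M A = (if {i,j} \<in> F then 1 else 0)"
  unfolding MI_def using mul_lt[of i j] in_F[of i j] by auto

lemma MI_S: "MI a0 bs bj M \<Longrightarrow> i < n \<Longrightarrow> j < n \<Longrightarrow> A = 3 + 3 * (n * n) + i * n + j \<Longrightarrow>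
   M A = expS a0 bs i j"
  unfolding MI_def by auto

lemma MI_J: "MI a0 bs bj M \<Longrightarrow> i < n \<Longrightarrow> j < n \<Longrightarrow> A = 3 + 2 * (n * n) + i * n + j \<Longrightarrow>
   M A = expJ a0 bj i j"
  unfolding MI_def by auto

lemma MI_storeS:
  assumes "MI a0 b bj M" "a0 < n" "b < n" "A = 3 + 3 * (n * n) + a0 * n + b"
    "v = (if sp E F a0 b then 1 else 0)"
  shows "MI a0 (Suc b) bj (M(A := v))"
proof -
  have lt: "a0 * n + b < n * n" using mul_lt assms by auto
  show ?thesis unfolding MI_def
  proof (intro conjI allI impI)
    fix x assume "x < 3 + 2 * (n * n)" then show "(M(A := v)) x = input_mem n E F s t x"
      using assms(1,4) unfolding MI_def by auto
  next
    fix i j assume ij: "i < n" "j < n"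
    have "i * n + j < n * n" using mul_lt ij by auto
    have e: "3 + 3 * (n * n) + i * n + j = A \<longleftrightarrow> i = a0 \<and> j = b"
      using mul_inj[of j b i a0] ij assms by auto
    show "(M(A := v)) (3 + 3 * (n * n) + i * n + j) = expS a0 (Suc b) i j"
      using assms(1,5) ij e unfolding MI_def expS_def by (auto simp: less_Suc_eq)
  next
    fix i j assume ij: "i < n" "j < n"
    have "i * n + j < n * n" using mul_lt ij by auto
    then have e: "3 + 2 * (n * n) + i * n + j \<noteq> A" using assms(4) by auto
    show "(M(A := v)) (3 + 2 * (n * n) + i * n + j) = expJ a0 bj i j"
      using assms(1) ij e unfolding MI_def by auto
  qed
qed

lemma MI_storeJ:
  assumes "MI a0 bs b M" "a0 < n" "b < n" "A = 3 + 2 * (n * n) + a0 * n + b"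
    "v = (if jspec E F a0 b then 1 else 0)" "a0 < b"
  shows "MI a0 bs (Suc b) (M(A := v))"
proof -
  have lt: "a0 * n + b < n * n" using mul_lt assms by auto
  show ?thesis unfolding MI_def
  proof (intro conjI allI impI)
    fix x assume "x < 3 + 2 * (n * n)" then show "(M(A := v)) x = input_mem n E F s t x"
      using assms(1,4) unfolding MI_def by auto
  next
    fix i j assume ij: "i < n" "j < n"
    have "i * n + j < n * n" using mul_lt ij by auto
    then have e: "3 + 3 * (n * n) + i * n + j \<noteq> A" using assms(4) lt by auto
    show "(M(A := v)) (3 + 3 * (n * n) + i * n + j) = expS a0 bs i j"
      using assms(1) ij e unfolding MI_def by auto
  next
    fix i j assume ij: "i < n" "j < n"
    have e: "3 + 2 * (n * n) + i * n + j = A \<longleftrightarrow> i = a0 \<and> j = b"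
      using mul_inj[of j b i a0] ij assms by auto
    show "(M(A := v)) (3 + 2 * (n * n) + i * n + j) = expJ a0 (Suc b) i j"
      using assms(1,5,6) ij e unfolding MI_def expJ_def by (auto simp: less_Suc_eq)
  qed
qed

lemma MI_row:
  assumes "MI (Suc a) n n M" "a < n" "A = 3 + 3 * (n * n) + a * n + a" "v = 1"
  shows "MI a (Suc a) (Suc a) (M(A := v))"
proof -
  have lt: "a * n + a < n * n" using mul_lt assms by auto
  show ?thesis unfolding MI_def
  proof (intro conjI allI impI)
    fix x assume "x < 3 + 2 * (n * n)" then show "(M(A := v)) x = input_mem n E F s t x"
      using assms(1,3) unfolding MI_def by auto
  next
    fix i j assume ij: "i < n" "j < n"
    have e: "3 + 3 * (n * n) + i * n + j = A \<longleftrightarrow> i = a \<and> j = a"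
      using mul_inj[of j a i a] ij assms by auto
    have "expS a (Suc a) i j = (if i = a \<and> j = a then 1 else expS (Suc a) n i j)"
      unfolding expS_def using ij by (auto simp: less_Suc_eq sp_refl dest: sp_range)
    then show "(M(A := v)) (3 + 3 * (n * n) + i * n + j) = expS a (Suc a) i j"
      using assms(1,4) ij e unfolding MI_def by auto
  next
    fix i j assume ij: "i < n" "j < n"
    have "i * n + j < n * n" using mul_lt ij by auto
    then have e: "3 + 2 * (n * n) + i * n + j \<noteq> A" using assms(3) by auto
    have "expJ a (Suc a) i j = expJ (Suc a) n i j"
      unfolding expJ_def using ij by (auto simp: less_Suc_eq)
    then show "(M(A := v)) (3 + 2 * (n * n) + i * n + j) = expJ a (Suc a) i j"
      using assms(1) ij e unfolding MI_def by auto
  qed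
qed

lemma MI_init: "MI n n n (input_mem n E F s t)"
  unfolding MI_def
proof (intro conjI allI impI)
  fix i j assume "i < n" "j < n"
  then show "input_mem n E F s t (3 + 3 * (n * n) + i * n + j) = expS n n i j"
    using in_high[of "3 + 3 * (n * n) + i * n + j"] unfolding expS_def by simp
next
  fix i j assume "i < n" "j < n"
  then show "input_mem n E F s t (3 + 2 * (n * n) + i * n + j) = expJ n n i j"
    using in_high[of "3 + 2 * (n * n) + i * n + j"] unfolding expJ_def by simp
qed simp

lemma MI_shift: "MI (Suc a) n n M \<Longrightarrow> MI (Suc a) n n M" by simp

end


definition HTs :: "st \<Rightarrow> com \<Rightarrow> (st \<Rightarrow> bool) \<Rightarrow> nat \<Rightarrow> bool" where
  "HTs s c Q T \<longleftrightarrow> (\<exists>t s'. big c s t s' \<and> Q s' \<and> t \<le> T)"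

lemma HTs_block: "Q (execl xs s) \<Longrightarrow> length xs \<le> T \<Longrightarrow> HTs s (Block xs) Q T"
  unfolding HTs_def using Blk by blast

lemma HTs_seq: "HTs s c1 Q1 T1 \<Longrightarrow> (\<And>s1. Q1 s1 \<Longrightarrow> HTs s1 c2 Q2 T2) \<Longrightarrow> HTs s (Seq c1 c2) Q2 (T1 + T2)"
  unfolding HTs_def by (meson Sq add_mono)

lemma HTs_if: "(fst s r \<noteq> 0 \<Longrightarrow> HTs s c1 Q T) \<Longrightarrow> (fst s r = 0 \<Longrightarrow> HTs s c2 Q T) \<Longrightarrow>
   HTs s (IfC r c1 c2) Q (T + 2)"
  unfolding HTs_def
proof -
  assume A: "fst s r \<noteq> 0 \<Longrightarrow> \<exists>t s'. big c1 s t s' \<and> Q s' \<and> t \<le> T"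
    "fst s r = 0 \<Longrightarrow> \<exists>t s'. big c2 s t s' \<and> Q s' \<and> t \<le> T"
  show "\<exists>t s'. big (IfC r c1 c2) s t s' \<and> Q s' \<and> t \<le> T + 2"
  proof (cases "fst s r = 0")
    case True
    then obtain t s' where "big c2 s t s'" "Q s'" "t \<le> T" using A by blast
    then show ?thesis using IfF[OF True] by (intro exI[of _ "t+1"] exI[of _ s']) auto
  next
    case False
    then obtain t s' where "big c1 s t s'" "Q s'" "t \<le> T" using A by blast
    then show ?thesis using IfT[OF False] by (intro exI[of _ "t+2"] exI[of _ s']) auto
  qed
qed

lemma HTs_mono: "HTs s c Q T \<Longrightarrow> (\<And>s. Q s \<Longrightarrow> Q' s) \<Longrightarrow> T \<le> T' \<Longrightarrow> HTs s c Q' T'"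
  unfolding HTs_def by (meson order_trans)

lemma HTs_while:
  fixes I :: "nat \<Rightarrow> st \<Rightarrow> bool"
  assumes step: "\<And>k s. I k s \<Longrightarrow> k < N \<Longrightarrow> fst s r \<noteq> 0 \<and> HTs s c (I (Suc k)) T"
  and fin: "\<And>s. I N s \<Longrightarrow> fst s r = 0"
  and init: "I 0 s"
  shows "HTs s (While r c) (I N) (N * (T + 2) + 1)"
  using while_aux[of I N r c T 0 s] step fin init unfolding HTs_def by auto

lemma HTs_big: "HTs s c Q T \<Longrightarrow> \<exists>t s'. big c s t s' \<and> Q s' \<and> t \<le> T"
  unfolding HTs_def by auto

context inst begin

lemma J_loop:
  assumes MI: "MI a b b M" and ab: "a < b" "b < n" "a < hi" "hi \<le> b"
    and R: "R 1 = n" "R 2 = 1" "R 19 = hi" "R 13 = a" "R 14 = 0" "R 15 = 3 + 3 * (n * n) + a * n + a"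
    "R 16 = 3 + a * n + b" "R 21 = hi - a"
  shows "HTs (R, M) (While 21 JBody)
     (\<lambda>(R', M'). M' = M \<and> (\<forall>r. r \<notin> {13,14,15,16,17,18,21} \<longrightarrow> R' r = R r) \<and>
        (R' 14 \<noteq> 0 \<longleftrightarrow> (\<exists>x. a \<le> x \<and> x < hi \<and> sp E F a x \<and> (x, b) \<in> E)))
     ((hi - a) * 11 + 1)"
proof -
  define I where "I = (\<lambda>k (R' :: nat \<Rightarrow> nat, M'). M' = M \<and> (\<forall>r. r \<notin> {13,14,15,16,17,18,21} \<longrightarrow> R' r = R r) \<and>
     R' 13 = a + k \<and> R' 15 = 3 + 3 * (n * n) + a * n + (a + k) \<and> R' 16 = 3 + (a + k) * n + b \<and>
     R' 21 = hi - (a + k) \<and>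
     (R' 14 \<noteq> 0 \<longleftrightarrow> (\<exists>x. a \<le> x \<and> x < a + k \<and> sp E F a x \<and> (x, b) \<in> E)))"
  have step: "fst s 21 \<noteq> 0 \<and> HTs s JBody (I (Suc k)) 9" if "I k s" "k < hi - a" for k s
  proof -
    obtain R' M' where s: "s = (R', M')" by (cases s)
    have I: "M' = M" "\<forall>r. r \<notin> {13,14,15,16,17,18,21} \<longrightarrow> R' r = R r"
      "R' 13 = a + k" "R' 15 = 3 + 3 * (n * n) + a * n + (a + k)" "R' 16 = 3 + (a + k) * n + b"
      "R' 21 = hi - (a + k)"
      "(R' 14 \<noteq> 0 \<longleftrightarrow> (\<exists>x. a \<le> x \<and> x < a + k \<and> sp E F a x \<and> (x, b) \<in> E))"
      using that s unfolding I_def by auto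
    have r: "R' 1 = n" "R' 2 = 1" "R' 19 = hi" using I(2) R by auto
    have xb: "a + k < b" using that ab by auto
    define vS where "vS = (if sp E F a (a + k) then 1 else 0 :: nat)"
    define vE where "vE = (if (a + k, b) \<in> E then 1 else 0 :: nat)"
    have e15: "M' (R' 15) = vS" using MI_S[OF MI, of a "a+k"] I ab xb unfolding vS_def expS_def by auto
    have e16: "M' (R' 16) = vE" using MI_E[OF MI, of "a+k" b] I ab xb unfolding vE_def by auto
    define R2 where "R2 = R'(17 := vS + vE - 1, 18 := vE, 14 := R' 14 + (vS + vE - 1), 13 := a + k + 1,
           15 := R' 15 + 1, 16 := R' 16 + n, 21 := hi - (a + k + 1))"
    have ex: "execl [Load 17 15, Load 18 16, Add 17 17 18, Sub 17 17 2, Add 14 14 17,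
                  Add 13 13 2, Add 15 15 2, Add 16 16 1, Sub 21 19 13] (R', M') = (R2, M')"
      unfolding R2_def using e15 e16 r I(3) by (auto simp: fun_eq_iff)
    have acc: "(vS + vE - 1 \<noteq> 0) \<longleftrightarrow> sp E F a (a + k) \<and> (a + k, b) \<in> E"
      unfolding vS_def vE_def by auto
    have ex2: "(\<exists>x. a \<le> x \<and> x < a + Suc k \<and> sp E F a x \<and> (x, b) \<in> E) \<longleftrightarrow>
       (\<exists>x. a \<le> x \<and> x < a + k \<and> sp E F a x \<and> (x, b) \<in> E) \<or> (sp E F a (a + k) \<and> (a + k, b) \<in> E)"
      by (auto simp: less_Suc_eq) (metis le_add1)
    have c1: "\<forall>r. r \<notin> {13,14,15,16,17,18,21} \<longrightarrow> R2 r = R r" using I(2) unfolding R2_def by simp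
    have c2: "R2 13 = a + Suc k" "R2 15 = 3 + 3 * (n * n) + a * n + (a + Suc k)"
      "R2 21 = hi - (a + Suc k)" unfolding R2_def using I by simp_all
    have c3: "R2 16 = 3 + (a + Suc k) * n + b" unfolding R2_def using I(5) by simp
    have c4: "R2 14 \<noteq> 0 \<longleftrightarrow> (\<exists>x. a \<le> x \<and> x < a + Suc k \<and> sp E F a x \<and> (x, b) \<in> E)"
      unfolding ex2 R2_def using I(7) acc by simp
    have "I (Suc k) (execl [Load 17 15, Load 18 16, Add 17 17 18, Sub 17 17 2, Add 14 14 17,
                  Add 13 13 2, Add 15 15 2, Add 16 16 1, Sub 21 19 13] (R', M'))"
      unfolding ex I_def using I(1) c1 c2 c3 c4 by simp
    moreover have "fst s 21 \<noteq> 0" using s I that by auto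
    ultimately show ?thesis unfolding JBody_def s by (auto intro!: HTs_block)
  qed
  have fin: "fst s 21 = 0" if "I (hi - a) s" for s
    using that ab unfolding I_def by auto
  have init: "I 0 (R, M)" unfolding I_def using R by auto
  have "HTs (R, M) (While 21 JBody) (I (hi - a)) ((hi - a) * (9 + 2) + 1)"
    by (rule HTs_while[OF step fin init])
  then show ?thesis
    by (rule HTs_mono) (use ab in \<open>auto simp: I_def\<close>)
qed

end


context inst begin

lemma S_loop:
  assumes MI: "MI a b (Suc b) M" and ab: "a < b" "b < n" "a < lw" "lw \<le> Suc b"
    and R: "R 1 = n" "R 2 = 1" "R 19 = lw" "R 13 = b" "R 14 = 0" "R 15 = 3 + 2 * (n * n) + a * n + b"
    "R 16 = 3 + 3 * (n * n) + b * n + b" "R 21 = Suc b - lw"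
  shows "HTs (R, M) (While 21 SBody)
     (\<lambda>(R', M'). M' = M \<and> (\<forall>r. r \<notin> {13,14,15,16,17,18,21} \<longrightarrow> R' r = R r) \<and>
        (R' 14 \<noteq> 0 \<longleftrightarrow> (\<exists>y. lw \<le> y \<and> y \<le> b \<and> a < y \<and> jspec E F a y \<and> sp E F y b)))
     ((Suc b - lw) * 12 + 1)"
proof -
  define I where "I = (\<lambda>k (R' :: nat \<Rightarrow> nat, M'). M' = M \<and> (\<forall>r. r \<notin> {13,14,15,16,17,18,21} \<longrightarrow> R' r = R r) \<and>
     R' 13 = b - k \<and> R' 15 = 3 + 2 * (n * n) + a * n + (b - k) \<and> R' 16 = 3 + 3 * (n * n) + (b - k) * n + b \<and>
     R' 21 = Suc (b - k) - lw \<and>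
     (R' 14 \<noteq> 0 \<longleftrightarrow> (\<exists>y. b - k < y \<and> y \<le> b \<and> a < y \<and> jspec E F a y \<and> sp E F y b)))"
  have step: "fst s 21 \<noteq> 0 \<and> HTs s SBody (I (Suc k)) 10" if "I k s" "k < Suc b - lw" for k s
  proof -
    obtain R' M' where s: "s = (R', M')" by (cases s)
    have I: "M' = M" "\<forall>r. r \<notin> {13,14,15,16,17,18,21} \<longrightarrow> R' r = R r"
      "R' 13 = b - k" "R' 15 = 3 + 2 * (n * n) + a * n + (b - k)" "R' 16 = 3 + 3 * (n * n) + (b - k) * n + b"
      "R' 21 = Suc (b - k) - lw"
      "(R' 14 \<noteq> 0 \<longleftrightarrow> (\<exists>y. b - k < y \<and> y \<le> b \<and> a < y \<and> jspec E F a y \<and> sp E F y b))"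
      using that s unfolding I_def by auto
    have r: "R' 1 = n" "R' 2 = 1" "R' 19 = lw" using I(2) R by auto
    have yb: "lw \<le> b - k" "k \<le> b" using that ab by auto
    define y where "y = b - k"
    have ya: "a < y" "y \<le> b" "y < n" using yb ab unfolding y_def by auto
    define vJ where "vJ = (if jspec E F a y then 1 else 0 :: nat)"
    define vS where "vS = (if sp E F y b then 1 else 0 :: nat)"
    have e15: "M' (R' 15) = vJ" using MI_J[OF MI, of a y] I ab ya unfolding vJ_def expJ_def y_def by auto
    have e16: "M' (R' 16) = vS" using MI_S[OF MI, of y b] I ab ya unfolding vS_def expS_def y_def by auto
    define R2 where "R2 = R'(18 := vS, 14 := R' 14 + (vJ + vS - 1), 13 := y - 1,
           15 := R' 15 - 1, 16 := R' 16 - n, 17 := y - 1 + 1, 21 := y - 1 + 1 - lw)"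
    have ex: "execl [Load 17 15, Load 18 16, Add 17 17 18, Sub 17 17 2, Add 14 14 17,
                  Sub 13 13 2, Sub 15 15 2, Sub 16 16 1, Add 17 13 2, Sub 21 17 19] (R', M') = (R2, M')"
      unfolding R2_def using e15 e16 r I(3) unfolding y_def by (auto simp: fun_eq_iff)
    have acc: "(vJ + vS - 1 \<noteq> 0) \<longleftrightarrow> jspec E F a y \<and> sp E F y b"
      unfolding vJ_def vS_def by auto
    have y1: "y = Suc (b - Suc k)" using ya yb unfolding y_def by auto
    have ex2: "(\<exists>y'. b - Suc k < y' \<and> y' \<le> b \<and> a < y' \<and> jspec E F a y' \<and> sp E F y' b) \<longleftrightarrow>
       (\<exists>y'. b - k < y' \<and> y' \<le> b \<and> a < y' \<and> jspec E F a y' \<and> sp E F y' b) \<or> (jspec E F a y \<and> sp E F y b)"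
    proof -
      have "b - Suc k < y' \<longleftrightarrow> b - k < y' \<or> y' = y" for y' using y1 unfolding y_def by auto
      then show ?thesis using ya by auto
    qed
    have a16: "3 + 3 * (n * n) + y * n + b - n = 3 + 3 * (n * n) + (b - Suc k) * n + b"
      using y1 by (simp add: algebra_simps)
    have c1: "\<forall>r. r \<notin> {13,14,15,16,17,18,21} \<longrightarrow> R2 r = R r" using I(2) unfolding R2_def by simp
    have c2: "R2 13 = b - Suc k" "R2 15 = 3 + 2 * (n * n) + a * n + (b - Suc k)"
      "R2 21 = Suc (b - Suc k) - lw" unfolding R2_def using I y1 unfolding y_def by simp_all
    have c3: "R2 16 = 3 + 3 * (n * n) + (b - Suc k) * n + b" unfolding R2_def using I(5) a16 unfolding y_def by simp
    have c4: "R2 14 \<noteq> 0 \<longleftrightarrow> (\<exists>y'. b - Suc k < y' \<and> y' \<le> b \<and> a < y' \<and> jspec E F a y' \<and> sp E F y' b)"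
      unfolding ex2 R2_def using I(7) acc by simp
    have "I (Suc k) (execl [Load 17 15, Load 18 16, Add 17 17 18, Sub 17 17 2, Add 14 14 17,
                  Sub 13 13 2, Sub 15 15 2, Sub 16 16 1, Add 17 13 2, Sub 21 17 19] (R', M'))"
      unfolding ex I_def using I(1) c1 c2 c3 c4 by simp
    moreover have "fst s 21 \<noteq> 0" using s I that by auto
    ultimately show ?thesis unfolding SBody_def s by (auto intro!: HTs_block)
  qed
  have fin: "fst s 21 = 0" if "I (Suc b - lw) s" for s
    using that ab unfolding I_def by auto
  have init: "I 0 (R, M)" unfolding I_def using R by auto
  have "HTs (R, M) (While 21 SBody) (I (Suc b - lw)) ((Suc b - lw) * (10 + 2) + 1)"
    by (rule HTs_while[OF step fin init])
  then show ?thesis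
  proof (rule HTs_mono)
    fix s assume "I (Suc b - lw) s"
    moreover have "b - (Suc b - lw) < y \<longleftrightarrow> lw \<le> y" for y using ab by auto
    ultimately show "(\<lambda>(R', M'). M' = M \<and> (\<forall>r. r \<notin> {13,14,15,16,17,18,21} \<longrightarrow> R' r = R r) \<and>
        (R' 14 \<noteq> 0 \<longleftrightarrow> (\<exists>y. lw \<le> y \<and> y \<le> b \<and> a < y \<and> jspec E F a y \<and> sp E F y b))) s"
      unfolding I_def by auto
  qed simp
qed

end


lemma HTs_seq_eq: "HTs s c1 (\<lambda>s'. s' = s1) T1 \<Longrightarrow> HTs s1 c2 Q T2 \<Longrightarrow> HTs s (Seq c1 c2) Q (T1 + T2)"
  using HTs_seq[of s c1 "\<lambda>s'. s' = s1" T1 c2 Q T2] by auto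

lemma curf_step: "0 < b \<Longrightarrow> curf F a b = (if a < b \<and> {a, b} \<in> F then Suc b else curf F a (b - 1))"
  by (cases b) auto

context inst begin

lemma hi_bounds: "a < b \<Longrightarrow> a < xhi F a (b - 1) \<and> xhi F a (b - 1) \<le> b"
proof (cases "curf F a (b - 1)")
  case 0
  assume "a < b" then show ?thesis using 0 by (simp add: xhi_def)
next
  case (Suc v)
  assume "a < b"
  have "a < v" "v \<le> b - 1" using curf_Suc[OF Suc] by auto
  then show ?thesis using Suc \<open>a < b\<close> by (simp add: xhi_def)
qed

lemma lo_bounds: "a < b \<Longrightarrow> a < lo F a b \<and> lo F a b \<le> Suc b"
proof (cases "curf F a b")
  case 0
  assume "a < b" then show ?thesis using 0 by (simp add: lo_def)
next
  case (Suc v)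
  have "a < v" "v \<le> b" using curf_Suc[OF Suc] by auto
  then show ?thesis using Suc by (simp add: lo_def)
qed

lemma B_body:
  assumes MI: "MI a b b M" and ab: "a < b" "b < n"
  and R: "R 1 = n" "R 2 = 1" "R 3 = n * n" "R 6 = a" "R 7 = 3 + a * n" "R 8 = 3 + 3 * (n * n) + a * n"
    "R 9 = 3 + 2 * (n * n) + a * n" "R 10 = b" "R 11 = curf F a (b - 1)" "R 22 = 3 + 3 * (n * n) + b * n"
    "R 50 = 0"
  shows "HTs (R, M) BBody (\<lambda>(R', M'). (\<forall>r. r \<notin> {10,11,12,13,14,15,16,17,18,19,21,22} \<longrightarrow> R' r = R r) \<and>
     R' 10 = Suc b \<and> R' 11 = curf F a b \<and> R' 12 = n - Suc b \<and> R' 22 = 3 + 3 * (n * n) + Suc b * n \<and>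
     MI a (Suc b) (Suc b) M') (23 * n + 37)"
proof -
  define hi where "hi = xhi F a (b - 1)"
  have hi: "a < hi" "hi \<le> b" using hi_bounds[OF ab(1)] unfolding hi_def by auto
  define R1 where "R1 = R(19 := hi)"
  have h1: "HTs (R, M) (IfC 11 (Block [Sub 19 11 2]) (Block [Add 19 6 2])) (\<lambda>s. s = (R1, M)) (1 + 2)"
    by (rule HTs_if; rule HTs_block) (auto simp: R1_def hi_def xhi_def R)
  define R2 where "R2 = R1(14 := 0, 13 := a, 15 := 3 + 3 * (n * n) + a * n + a, 16 := 3 + a * n + b, 21 := hi - a)"
  have h2: "HTs (R1, M) (Block [LoadConst 14 0, Add 13 6 ZR, Add 15 8 6, Add 16 7 10, Sub 21 19 13])
     (\<lambda>s. s = (R2, M)) 5"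
    by (rule HTs_block) (auto simp: R2_def R1_def R ZR_def fun_eq_iff)
  have h3: "HTs (R2, M) (While 21 JBody)
     (\<lambda>(R', M'). M' = M \<and> (\<forall>r. r \<notin> {13,14,15,16,17,18,21} \<longrightarrow> R' r = R2 r) \<and>
        (R' 14 \<noteq> 0 \<longleftrightarrow> (\<exists>x. a \<le> x \<and> x < hi \<and> sp E F a x \<and> (x, b) \<in> E)))
     ((hi - a) * 11 + 1)"
    by (rule J_loop[OF MI ab hi]) (auto simp: R2_def R1_def R R(1)[unfolded One_nat_def])
  let ?Post = "\<lambda>(R', M'). (\<forall>r. r \<notin> {10,11,12,13,14,15,16,17,18,19,21,22} \<longrightarrow> R' r = R r) \<and>
     R' 10 = Suc b \<and> R' 11 = curf F a b \<and> R' 12 = n - Suc b \<and> R' 22 = 3 + 3 * (n * n) + Suc b * n \<and>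
     MI a (Suc b) (Suc b) M'"
  have h4: "HTs s3
   (Seq (Block [Sub 17 2 14, Sub 17 2 17, Add 15 9 10, Store 15 17, Add 15 7 3, Add 15 15 10, Load 17 15])
   (Seq (IfC 17 (Block [Add 11 10 2]) (Block []))
   (Seq (IfC 11 (Block [Add 19 11 ZR]) (Block [Add 19 6 2]))
   (Seq (Block [LoadConst 14 0, Add 13 10 ZR, Add 15 9 10, Add 16 22 10, Add 17 13 2, Sub 21 17 19])
   (Seq (While 21 SBody)
        (Block [Sub 17 2 14, Sub 17 2 17, Add 15 8 10, Store 15 17, Add 10 10 2, Add 22 22 1, Sub 12 1 10]))))))
     ?Post (7 + ((1 + 2) + ((1 + 2) + (6 + ((n * 12 + 1) + 7)))))"
    if Q3: "(\<lambda>(R', M'). M' = M \<and> (\<forall>r. r \<notin> {13,14,15,16,17,18,21} \<longrightarrow> R' r = R2 r) \<and>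
        (R' 14 \<noteq> 0 \<longleftrightarrow> (\<exists>x. a \<le> x \<and> x < hi \<and> sp E F a x \<and> (x, b) \<in> E))) s3" for s3
  proof -
    obtain R3 M3 where s3: "s3 = (R3, M3)" by (cases s3)
    have M3: "M3 = M" using Q3 s3 by auto
    have fr3: "\<And>r. r \<notin> {13,14,15,16,17,18,19,21} \<Longrightarrow> R3 r = R r"
      using Q3 s3 unfolding R2_def R1_def by auto
    have r3: "R3 1 = n" "R3 2 = 1" "R3 3 = n * n" "R3 6 = a" "R3 7 = 3 + a * n"
      "R3 8 = 3 + 3 * (n * n) + a * n" "R3 9 = 3 + 2 * (n * n) + a * n" "R3 10 = b"
      "R3 11 = curf F a (b - 1)" "R3 22 = 3 + 3 * (n * n) + b * n" "R3 50 = 0"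
      using fr3 R by auto
    have acc3: "R3 14 \<noteq> 0 \<longleftrightarrow> jspec E F a b" using Q3 s3 unfolding jspec_def hi_def by auto
    define vJ where "vJ = (if jspec E F a b then 1 else 0 :: nat)"
    have vJ: "1 - (1 - R3 14) = vJ" using acc3 unfolding vJ_def by auto
    define AJ where "AJ = 3 + 2 * (n * n) + a * n + b"
    define M4 where "M4 = M(AJ := vJ)"
    have MI4: "MI a b (Suc b) M4" unfolding M4_def using MI_storeJ[OF MI _ ab(2) AJ_def vJ_def ab(1)] ab by auto
    define AF where "AF = 3 + a * n + n * n + b"
    define fb where "fb = (if {a, b} \<in> F then 1 else 0 :: nat)"
    have fbv: "M4 AF = fb" using MI_F[OF MI4, of a b AF] ab unfolding AF_def fb_def by auto
    define R4 where "R4 = R3(17 := fb, 15 := AF)"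
    have e4: "execl [Sub 17 2 14, Sub 17 2 17, Add 15 9 10, Store 15 17, Add 15 7 3, Add 15 15 10, Load 17 15] (R3, M3)
       = (R4, M4)"
      using vJ fbv r3 M3 unfolding R4_def M4_def AJ_def AF_def by (auto simp: fun_eq_iff)
    define R5 where "R5 = R4(11 := curf F a b)"
    have cb: "curf F a b = (if a < b \<and> {a, b} \<in> F then Suc b else curf F a (b - 1))"
      using curf_step[of b F a] ab by auto
    have h5: "HTs (R4, M4) (IfC 17 (Block [Add 11 10 2]) (Block [])) (\<lambda>s. s = (R5, M4)) (1 + 2)"
    proof (rule HTs_if)
      assume "fst (R4, M4) 17 \<noteq> 0"
      then have "{a, b} \<in> F" unfolding R4_def fb_def by (auto split: if_splits)
      then show "HTs (R4, M4) (Block [Add 11 10 2]) (\<lambda>s. s = (R5, M4)) 1"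
        by (intro HTs_block) (auto simp: R5_def R4_def r3 cb ab)
    next
      assume "fst (R4, M4) 17 = 0"
      then have "{a, b} \<notin> F" unfolding R4_def fb_def by (auto split: if_splits)
      then show "HTs (R4, M4) (Block []) (\<lambda>s. s = (R5, M4)) 1"
        by (intro HTs_block) (auto simp: R5_def R4_def r3 cb ab)
    qed
    define lw where "lw = lo F a b"
    have lw: "a < lw" "lw \<le> Suc b" using lo_bounds[OF ab(1)] unfolding lw_def by auto
    define R6 where "R6 = R5(19 := lw)"
    have h6: "HTs (R5, M4) (IfC 11 (Block [Add 19 11 ZR]) (Block [Add 19 6 2])) (\<lambda>s. s = (R6, M4)) (1 + 2)"
      by (rule HTs_if; rule HTs_block) (auto simp: R6_def R5_def R4_def lw_def lo_def r3 ZR_def)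
    define R7 where "R7 = R6(14 := 0, 13 := b, 15 := 3 + 2 * (n * n) + a * n + b,
         16 := 3 + 3 * (n * n) + b * n + b, 17 := Suc b, 21 := Suc b - lw)"
    have h7: "HTs (R6, M4) (Block [LoadConst 14 0, Add 13 10 ZR, Add 15 9 10, Add 16 22 10, Add 17 13 2, Sub 21 17 19])
       (\<lambda>s. s = (R7, M4)) 6"
      by (rule HTs_block) (auto simp: R7_def R6_def R5_def R4_def r3 ZR_def fun_eq_iff)
    have h8: "HTs (R7, M4) (While 21 SBody)
     (\<lambda>(R', M'). M' = M4 \<and> (\<forall>r. r \<notin> {13,14,15,16,17,18,21} \<longrightarrow> R' r = R7 r) \<and>
        (R' 14 \<noteq> 0 \<longleftrightarrow> (\<exists>y. lw \<le> y \<and> y \<le> b \<and> a < y \<and> jspec E F a y \<and> sp E F y b)))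
     ((Suc b - lw) * 12 + 1)"
      by (rule S_loop[OF MI4 ab lw]) (auto simp: R7_def R6_def R5_def R4_def r3 r3(1)[unfolded One_nat_def])
    have h9: "HTs s8 (Block [Sub 17 2 14, Sub 17 2 17, Add 15 8 10, Store 15 17, Add 10 10 2, Add 22 22 1, Sub 12 1 10])
       ?Post 7"
      if Q8: "(\<lambda>(R', M'). M' = M4 \<and> (\<forall>r. r \<notin> {13,14,15,16,17,18,21} \<longrightarrow> R' r = R7 r) \<and>
        (R' 14 \<noteq> 0 \<longleftrightarrow> (\<exists>y. lw \<le> y \<and> y \<le> b \<and> a < y \<and> jspec E F a y \<and> sp E F y b))) s8" for s8
    proof -
      obtain R8 M8 where s8: "s8 = (R8, M8)" by (cases s8)
      have M8: "M8 = M4" using Q8 s8 by auto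
      have fr8: "\<And>r. r \<notin> {10,11,12,13,14,15,16,17,18,19,21,22} \<Longrightarrow> R8 r = R r"
        using Q8 s8 fr3 unfolding R7_def R6_def R5_def R4_def by auto
      have r8: "R8 1 = n" "R8 2 = 1" "R8 8 = 3 + 3 * (n * n) + a * n" "R8 10 = b" "R8 11 = curf F a b"
        "R8 22 = 3 + 3 * (n * n) + b * n"
        using Q8 s8 r3 unfolding R7_def R6_def R5_def R4_def by auto
      have "R8 14 \<noteq> 0 \<longleftrightarrow> (\<exists>y. lw \<le> y \<and> y \<le> b \<and> a < y \<and> jspec E F a y \<and> sp E F y b)"
        using Q8 s8 by auto
      also have "\<dots> \<longleftrightarrow> sp E F a b" unfolding lw_def main_eq[OF ab(1)] using lw lw_def by auto
      finally have acc8: "R8 14 \<noteq> 0 \<longleftrightarrow> sp E F a b" .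
      define vS where "vS = (if sp E F a b then 1 else 0 :: nat)"
      have vS: "1 - (1 - R8 14) = vS" using acc8 unfolding vS_def by auto
      define AS where "AS = 3 + 3 * (n * n) + a * n + b"
      have MI9: "MI a (Suc b) (Suc b) (M4(AS := vS))"
        using MI_storeS[OF MI4 _ ab(2) AS_def vS_def] ab by auto
      show ?thesis unfolding s8
      proof (rule HTs_block)
        show "?Post (execl [Sub 17 2 14, Sub 17 2 17, Add 15 8 10, Store 15 17, Add 10 10 2, Add 22 22 1, Sub 12 1 10]
           (R8, M8))"
          using MI9 fr8 r8 vS M8 unfolding AS_def by simp
      qed simp
    qed
    show ?thesis unfolding s3
      apply (rule HTs_seq_eq[OF HTs_block])
        apply (rule e4)
       apply simp
      apply (rule HTs_seq_eq[OF h5])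
      apply (rule HTs_seq_eq[OF h6])
      apply (rule HTs_seq_eq[OF h7])
      apply (rule HTs_seq[OF HTs_mono[OF h8]])
        apply assumption
      using lw ab apply simp
      apply (rule h9)
      by simp
  qed
  have "HTs (R, M) BBody ?Post ((1 + 2) + (5 + ((n * 11 + 1) + (7 + ((1 + 2) + ((1 + 2) + (6 + ((n * 12 + 1) + 7))))))))"
    unfolding BBody_def
    apply (rule HTs_seq_eq[OF h1])
    apply (rule HTs_seq_eq[OF h2])
    apply (rule HTs_seq[OF HTs_mono[OF h3]])
      apply assumption
    using hi ab apply simp
    apply (rule h4)
    by simp
  then show ?thesis by (rule HTs_mono) simp_all
qed

end


context inst begin

lemma B_loop:
  assumes MI: "MI a (Suc a) (Suc a) M" and an: "a < n"
  and R: "R 1 = n" "R 2 = 1" "R 3 = n * n" "R 6 = a" "R 7 = 3 + a * n" "R 8 = 3 + 3 * (n * n) + a * n"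
    "R 9 = 3 + 2 * (n * n) + a * n" "R 10 = Suc a" "R 11 = 0" "R 12 = n - Suc a"
    "R 22 = 3 + 3 * (n * n) + Suc a * n" "R 50 = 0"
  shows "HTs (R, M) (While 12 BBody) (\<lambda>(R', M'). (\<forall>r. r \<notin> {10,11,12,13,14,15,16,17,18,19,21,22} \<longrightarrow> R' r = R r) \<and>
      MI a n n M') (n * ((23 * n + 37) + 2) + 1)"
proof -
  define I where "I = (\<lambda>k (R' :: nat \<Rightarrow> nat, M'). (\<forall>r. r \<notin> {10,11,12,13,14,15,16,17,18,19,21,22} \<longrightarrow> R' r = R r) \<and>
     R' 10 = Suc a + k \<and> R' 11 = curf F a (a + k) \<and> R' 12 = n - (Suc a + k) \<and>
     R' 22 = 3 + 3 * (n * n) + (Suc a + k) * n \<and> MI a (Suc a + k) (Suc a + k) M')"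
  have step: "fst s 12 \<noteq> 0 \<and> HTs s BBody (I (Suc k)) (23 * n + 37)" if "I k s" "k < n - Suc a" for k s
  proof -
    obtain R' M' where s: "s = (R', M')" by (cases s)
    have I: "\<forall>r. r \<notin> {10,11,12,13,14,15,16,17,18,19,21,22} \<longrightarrow> R' r = R r"
      "R' 10 = Suc a + k" "R' 11 = curf F a (a + k)" "R' 12 = n - (Suc a + k)"
      "R' 22 = 3 + 3 * (n * n) + (Suc a + k) * n" "MI a (Suc a + k) (Suc a + k) M'"
      using that s unfolding I_def by auto
    have b: "a < Suc a + k" "Suc a + k < n" using that by auto
    have r: "R' 1 = n" "R' 2 = 1" "R' 3 = n * n" "R' 6 = a" "R' 7 = 3 + a * n"
      "R' 8 = 3 + 3 * (n * n) + a * n" "R' 9 = 3 + 2 * (n * n) + a * n" "R' 50 = 0"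
      using I(1) R by auto
    have c: "R' 11 = curf F a (Suc a + k - 1)" using I(3) by simp
    have "HTs (R', M') BBody (\<lambda>(R'', M''). (\<forall>r. r \<notin> {10,11,12,13,14,15,16,17,18,19,21,22} \<longrightarrow> R'' r = R' r) \<and>
     R'' 10 = Suc (Suc a + k) \<and> R'' 11 = curf F a (Suc a + k) \<and> R'' 12 = n - Suc (Suc a + k) \<and>
     R'' 22 = 3 + 3 * (n * n) + Suc (Suc a + k) * n \<and>
     MI a (Suc (Suc a + k)) (Suc (Suc a + k)) M'') (23 * n + 37)"
      by (rule B_body[OF I(6) b r(1-7) I(2) c I(5) r(8)])
    then have "HTs (R', M') BBody (I (Suc k)) (23 * n + 37)"
      by (rule HTs_mono) (use I(1) in \<open>auto simp: I_def\<close>)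
    moreover have "fst s 12 \<noteq> 0" using s I b by auto
    ultimately show ?thesis using s by simp
  qed
  have fin: "fst s 12 = 0" if "I (n - Suc a) s" for s
    using that an unfolding I_def by auto
  have init: "I 0 (R, M)" unfolding I_def using R MI curf_le[of a a F] by auto
  have "HTs (R, M) (While 12 BBody) (I (n - Suc a)) ((n - Suc a) * ((23 * n + 37) + 2) + 1)"
    by (rule HTs_while[OF step fin init])
  then show ?thesis
    by (rule HTs_mono) (use an in \<open>auto simp: I_def intro: mult_le_mono1\<close>)
qed

lemma A_body:
  assumes MI: "MI (Suc a) n n M" and an: "a < n"
  and R: "R 1 = n" "R 2 = 1" "R 3 = n * n" "R 4 = 3 + 2 * (n * n)" "R 5 = 3 + 3 * (n * n)"
    "R 20 = Suc a" "R 7 = 3 + Suc a * n" "R 8 = 3 + 3 * (n * n) + Suc a * n"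
    "R 9 = 3 + 2 * (n * n) + Suc a * n" "R 50 = 0"
  shows "HTs (R, M) ABody (\<lambda>(R', M'). R' 1 = n \<and> R' 2 = 1 \<and> R' 3 = n * n \<and> R' 4 = 3 + 2 * (n * n) \<and>
     R' 5 = 3 + 3 * (n * n) \<and> R' 20 = a \<and> R' 7 = 3 + a * n \<and> R' 8 = 3 + 3 * (n * n) + a * n \<and>
     R' 9 = 3 + 2 * (n * n) + a * n \<and> R' 50 = 0 \<and> MI a n n M') (10 + ((n * ((23 * n + 37) + 2) + 1) + 1))"
proof -
  define R1 where "R1 = R(6 := a, 7 := 3 + a * n, 8 := 3 + 3 * (n * n) + a * n, 9 := 3 + 2 * (n * n) + a * n,
     15 := 3 + 3 * (n * n) + a * n + a, 11 := 0, 10 := Suc a, 22 := 3 + 3 * (n * n) + Suc a * n,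
     12 := n - Suc a)"
  define M1 where "M1 = M(3 + 3 * (n * n) + a * n + a := 1)"
  have MI1: "MI a (Suc a) (Suc a) M1" unfolding M1_def by (rule MI_row[OF MI an]) auto
  have e1: "execl [Sub 6 20 2, Sub 7 7 1, Sub 8 8 1, Sub 9 9 1, Add 15 8 6, Store 15 2,
                LoadConst 11 0, Add 10 6 2, Add 22 8 1, Sub 12 1 10] (R, M) = (R1, M1)"
    unfolding R1_def M1_def using R by (auto simp: fun_eq_iff algebra_simps)
  have h2: "HTs (R1, M1) (While 12 BBody) (\<lambda>(R', M'). (\<forall>r. r \<notin> {10,11,12,13,14,15,16,17,18,19,21,22} \<longrightarrow> R' r = R1 r) \<and>
      MI a n n M') (n * ((23 * n + 37) + 2) + 1)"
    by (rule B_loop[OF MI1 an]) (auto simp: R1_def R R(1)[unfolded One_nat_def])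
  show ?thesis unfolding ABody_def
    apply (rule HTs_seq_eq[OF HTs_block])
      apply (rule e1)
     apply simp
    apply (rule HTs_seq[OF h2])
    subgoal for s
      apply (cases s)
      apply (rule HTs_block)
      using R by (auto simp: R1_def)
    done
qed

lemma A_loop:
  assumes MI: "MI n n n M"
  and R: "R 1 = n" "R 2 = 1" "R 3 = n * n" "R 4 = 3 + 2 * (n * n)" "R 5 = 3 + 3 * (n * n)"
    "R 20 = n" "R 7 = 3 + n * n" "R 8 = 3 + 3 * (n * n) + n * n"
    "R 9 = 3 + 2 * (n * n) + n * n" "R 50 = 0"
  shows "HTs (R, M) (While 20 ABody) (\<lambda>(R', M'). R' 1 = n \<and> R' 2 = 1 \<and> R' 5 = 3 + 3 * (n * n) \<and>
     R' 50 = 0 \<and> MI 0 n n M') (n * ((10 + ((n * ((23 * n + 37) + 2) + 1) + 1)) + 2) + 1)"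
proof -
  define I where "I = (\<lambda>k (R' :: nat \<Rightarrow> nat, M'). R' 1 = n \<and> R' 2 = 1 \<and> R' 3 = n * n \<and> R' 4 = 3 + 2 * (n * n) \<and>
     R' 5 = 3 + 3 * (n * n) \<and> R' 20 = n - k \<and> R' 7 = 3 + (n - k) * n \<and> R' 8 = 3 + 3 * (n * n) + (n - k) * n \<and>
     R' 9 = 3 + 2 * (n * n) + (n - k) * n \<and> R' 50 = 0 \<and> MI (n - k) n n M')"
  have step: "fst s 20 \<noteq> 0 \<and> HTs s ABody (I (Suc k)) (10 + ((n * ((23 * n + 37) + 2) + 1) + 1))"
    if "I k s" "k < n" for k s
  proof -
    obtain R' M' where s: "s = (R', M')" by (cases s)
    have nk: "n - k = Suc (n - Suc k)" "n - Suc k < n" using that by auto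
    have I: "R' 1 = n" "R' 2 = 1" "R' 3 = n * n" "R' 4 = 3 + 2 * (n * n)"
     "R' 5 = 3 + 3 * (n * n)" "R' 20 = Suc (n - Suc k)" "R' 7 = 3 + Suc (n - Suc k) * n"
     "R' 8 = 3 + 3 * (n * n) + Suc (n - Suc k) * n"
     "R' 9 = 3 + 2 * (n * n) + Suc (n - Suc k) * n" "R' 50 = 0" "MI (Suc (n - Suc k)) n n M'"
      using that s nk(1) unfolding I_def by auto
    have "HTs (R', M') ABody (I (Suc k)) (10 + ((n * ((23 * n + 37) + 2) + 1) + 1))"
      by (rule HTs_mono[OF A_body[OF I(11) nk(2) I(1-10)]]) (auto simp: I_def)
    then show ?thesis using s I by simp
  qed
  have fin: "fst s 20 = 0" if "I n s" for s
    using that unfolding I_def by auto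
  have init: "I 0 (R, M)" unfolding I_def using R MI by auto
  have "HTs (R, M) (While 20 ABody) (I n) (n * ((10 + ((n * ((23 * n + 37) + 2) + 1) + 1)) + 2) + 1)"
    by (rule HTs_while[OF step fin init])
  then show ?thesis
    by (rule HTs_mono) (auto simp: I_def)
qed

end


context inst begin

definition TA :: nat where "TA = n * ((10 + ((n * ((23 * n + 37) + 2) + 1) + 1)) + 2) + 1"

lemma Main_ok:
  shows "HTs (\<lambda>_. 0, input_mem n E F s t) Main (\<lambda>(R, M). R 0 = (if sp E F s t then 1 else 0))
     (4 + ((n * (2 + 2) + 1) + (8 + (TA + (6 + ((n * (2 + 2) + 1) + 2))))))"
proof -
  have st: "s < n" "t < n" using vi unfolding valid_instance_def by auto
  let ?M0 = "input_mem n E F s t"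
  have m0: "?M0 0 = n" "?M0 1 = s" "?M0 2 = t" unfolding input_mem_def by auto
  define R1 where "R1 = (\<lambda>_::nat. 0 :: nat)(1 := n, 2 := 1, 3 := 0, 23 := n)"
  have h1: "HTs (\<lambda>_. 0, ?M0) (Block [Load 1 ZR, LoadConst 2 1, LoadConst 3 0, Add 23 1 ZR])
     (\<lambda>s'. s' = (R1, ?M0)) 4"
    by (rule HTs_block) (auto simp: R1_def ZR_def m0 fun_eq_iff)
  define I0 where "I0 = (\<lambda>k (R' :: nat \<Rightarrow> nat, M' :: nat \<Rightarrow> nat). M' = ?M0 \<and> R' 1 = n \<and> R' 2 = 1 \<and>
     R' 3 = k * n \<and> R' 23 = n - k \<and> R' 50 = 0)"
  have h2: "HTs (R1, ?M0) (While 23 (Block [Add 3 3 1, Sub 23 23 2])) (I0 n) (n * (2 + 2) + 1)"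
  proof (rule HTs_while)
    fix k s' assume "I0 k s'" "k < n"
    then show "fst s' 23 \<noteq> 0 \<and> HTs s' (Block [Add 3 3 1, Sub 23 23 2]) (I0 (Suc k)) 2"
      by (cases s') (auto simp: I0_def intro!: HTs_block)
  next
    fix s' assume "I0 n s'" then show "fst s' 23 = 0" by (cases s') (auto simp: I0_def)
  next
    show "I0 0 (R1, ?M0)" by (auto simp: I0_def R1_def)
  qed
  define I2 where "I2 = (\<lambda>k (R' :: nat \<Rightarrow> nat, M' :: nat \<Rightarrow> nat). MI 0 n n M' \<and> R' 1 = n \<and> R' 2 = 1 \<and>
     R' 15 = 3 + 3 * (n * n) + k * n \<and> R' 23 = s - k \<and> R' 25 = t)"
  have h5: "HTs s5 (Seq (Block [LoadConst 17 1, Load 24 17, LoadConst 17 2, Load 25 17, Add 15 5 ZR, Add 23 24 ZR])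
   (Seq (While 23 (Block [Add 15 15 1, Sub 23 23 2]))
        (Block [Add 15 15 25, Load 0 15])))
     (\<lambda>(R, M). R 0 = (if sp E F s t then 1 else 0)) (6 + ((n * (2 + 2) + 1) + 2))"
    if Q: "(\<lambda>(R', M'). R' 1 = n \<and> R' 2 = 1 \<and> R' 5 = 3 + 3 * (n * n) \<and>
     R' 50 = 0 \<and> MI 0 n n M') s5" for s5
  proof -
    obtain R5 M5 where s5: "s5 = (R5, M5)" by (cases s5)
    have r5: "R5 1 = n" "R5 2 = 1" "R5 5 = 3 + 3 * (n * n)" "R5 50 = 0" "MI 0 n n M5" using Q s5 by auto
    have mm: "M5 1 = s" "M5 2 = t" using r5(5) m0 st unfolding MI_def by auto
    define R6 where "R6 = R5(17 := 2, 24 := s, 25 := t, 15 := 3 + 3 * (n * n), 23 := s)"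
    have h6: "HTs (R5, M5) (Block [LoadConst 17 1, Load 24 17, LoadConst 17 2, Load 25 17, Add 15 5 ZR, Add 23 24 ZR])
      (\<lambda>s'. s' = (R6, M5)) 6"
      by (rule HTs_block) (auto simp: R6_def ZR_def mm r5 mm(1)[unfolded One_nat_def] fun_eq_iff)
    have h7: "HTs (R6, M5) (While 23 (Block [Add 15 15 1, Sub 23 23 2])) (I2 s) (s * (2 + 2) + 1)"
    proof (rule HTs_while)
      fix k s' assume "I2 k s'" "k < s"
      then show "fst s' 23 \<noteq> 0 \<and> HTs s' (Block [Add 15 15 1, Sub 23 23 2]) (I2 (Suc k)) 2"
        by (cases s') (auto simp: I2_def intro!: HTs_block)
    next
      fix s' assume "I2 s s'" then show "fst s' 23 = 0" by (cases s') (auto simp: I2_def)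
    next
      show "I2 0 (R6, M5)" using r5 by (auto simp: I2_def R6_def)
    qed
    have h8: "HTs s8 (Block [Add 15 15 25, Load 0 15]) (\<lambda>(R, M). R 0 = (if sp E F s t then 1 else 0)) 2"
      if "I2 s s8" for s8
    proof -
      obtain R8 M8 where s8: "s8 = (R8, M8)" by (cases s8)
      have r8: "MI 0 n n M8" "R8 15 = 3 + 3 * (n * n) + s * n" "R8 25 = t" using that s8 by (auto simp: I2_def)
      have "M8 (3 + 3 * (n * n) + s * n + t) = expS 0 n s t" using MI_S[OF r8(1)] st by auto
      also have "\<dots> = (if sp E F s t then 1 else 0)" unfolding expS_def using st by auto
      finally show ?thesis unfolding s8 by (intro HTs_block) (auto simp: r8)
    qed
    have "HTs (R5, M5) (Seq (Block [LoadConst 17 1, Load 24 17, LoadConst 17 2, Load 25 17, Add 15 5 ZR, Add 23 24 ZR])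
     (Seq (While 23 (Block [Add 15 15 1, Sub 23 23 2]))
        (Block [Add 15 15 25, Load 0 15])))
     (\<lambda>(R, M). R 0 = (if sp E F s t then 1 else 0)) (6 + ((s * (2 + 2) + 1) + 2))"
      apply (rule HTs_seq_eq[OF h6])
      apply (rule HTs_seq[OF h7])
      by (rule h8)
    then show ?thesis unfolding s5 by (rule HTs_mono) (use st in auto)
  qed
  have h3: "HTs s3 (Seq (Block [LoadConst 17 3, Add 4 17 3, Add 4 4 3, Add 5 4 3, Add 20 1 ZR,
                Add 7 17 3, Add 8 5 3, Add 9 4 3])
   (Seq (While 20 ABody)
   (Seq (Block [LoadConst 17 1, Load 24 17, LoadConst 17 2, Load 25 17, Add 15 5 ZR, Add 23 24 ZR])
   (Seq (While 23 (Block [Add 15 15 1, Sub 23 23 2]))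
        (Block [Add 15 15 25, Load 0 15])))))
     (\<lambda>(R, M). R 0 = (if sp E F s t then 1 else 0)) (8 + (TA + (6 + ((n * (2 + 2) + 1) + 2))))"
    if "I0 n s3" for s3
  proof -
    obtain R3 M3 where s3: "s3 = (R3, M3)" by (cases s3)
    have r3: "M3 = ?M0" "R3 1 = n" "R3 2 = 1" "R3 3 = n * n" "R3 50 = 0" using that s3 by (auto simp: I0_def)
    define R4 where "R4 = R3(17 := 3, 4 := 3 + 2 * (n * n), 5 := 3 + 3 * (n * n), 20 := n,
       7 := 3 + n * n, 8 := 3 + 3 * (n * n) + n * n, 9 := 3 + 2 * (n * n) + n * n)"
    have h4: "HTs (R3, M3) (Block [LoadConst 17 3, Add 4 17 3, Add 4 4 3, Add 5 4 3, Add 20 1 ZR,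
                Add 7 17 3, Add 8 5 3, Add 9 4 3]) (\<lambda>s'. s' = (R4, M3)) 8"
      by (rule HTs_block) (auto simp: R4_def ZR_def r3 r3(2)[unfolded One_nat_def] fun_eq_iff)
    have hA: "HTs (R4, M3) (While 20 ABody) (\<lambda>(R', M'). R' 1 = n \<and> R' 2 = 1 \<and> R' 5 = 3 + 3 * (n * n) \<and>
     R' 50 = 0 \<and> MI 0 n n M') TA"
      unfolding TA_def
      by (rule A_loop) (auto simp: R4_def r3 MI_init r3(2)[unfolded One_nat_def])
    show ?thesis unfolding s3
      apply (rule HTs_seq_eq[OF h4])
      apply (rule HTs_seq[OF hA])
      by (rule h5)
  qed
  show ?thesis
    unfolding Main_def
    apply (rule HTs_seq_eq[OF h1])
    apply (rule HTs_seq[OF h2])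
    by (rule h3)
qed

end

theorem mainTheorem1:
  shows "\<exists>(prog :: instr list) (C :: nat).
     \<forall>n E F s t. valid_instance n E F s t \<and> well_parenthesized F \<longrightarrow>
       (\<exists>k \<le> C * n ^ 3.
          halted prog (run prog k (init_config n E F s t)) \<and>
          reg (run prog k (init_config n E F s t)) 0 =
            (if safe_path_exists E F s t then 1 else 0))"
proof (rule exI[of _ "comp 0 Main"], rule exI[of _ 116], intro allI impI)
  fix n E F s t
  assume A: "valid_instance n E F s t \<and> well_parenthesized F"
  then interpret inst n E F s t by unfold_locales auto
  have n1: "1 \<le> n" using A unfolding valid_instance_def by auto
  let ?prog = "comp 0 Main"
  obtain k s' where big: "big Main (\<lambda>_. 0, input_mem n E F s t) k s'"
    and Q: "fst s' 0 = (if sp E F s t then 1 else 0)"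
    and kb: "k \<le> 4 + ((n * (2 + 2) + 1) + (8 + (TA + (6 + ((n * (2 + 2) + 1) + 2)))))"
    using HTs_big[OF Main_ok] by (auto split: prod.splits)
  have run: "run ?prog k (cfg 0 (\<lambda>_. 0, input_mem n E F s t)) = cfg (0 + clen Main) s'"
    by (rule sim[OF big wfc_Main]) (auto simp: ZR_def code_at_def)
  have ic: "init_config n E F s t = cfg 0 (\<lambda>_. 0, input_mem n E F s t)"
    unfolding init_config_def cfg_def by simp
  have k3: "k \<le> 116 * n ^ 3"
  proof -
    have "k \<le> 23 * n^3 + 47 * n^2 + 22 * n + 24"
      using kb unfolding TA_def by (simp add: algebra_simps power3_eq_cube power2_eq_square)
    also have "\<dots> \<le> 23 * n^3 + 47 * n^3 + 22 * n^3 + 24 * n^3"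
    proof -
      have a: "n^2 \<le> n^3" by (rule power_increasing) (use n1 in auto)
      have "n^1 \<le> n^3" by (rule power_increasing) (use n1 in auto)
      then have b: "n \<le> n^3" by simp
      have c: "1 \<le> n^3" using n1 by simp
      show ?thesis using a b c by linarith
    qed
    finally show ?thesis by simp
  qed
  show "\<exists>k\<le>116 * n ^ 3. halted ?prog (run ?prog k (init_config n E F s t)) \<and>
          reg (run ?prog k (init_config n E F s t)) 0 = (if safe_path_exists E F s t then 1 else 0)"
    using k3 run Q unfolding ic
    by (intro exI[of _ k]) (auto simp: halted_def cfg_def sp_def)
qed


end
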